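(* With $I_i'$ ($i=1,\dots,M$) as follows: base stations $\mathcal{M}=\{1,\dots,M\}$, test points $\mathcal{N}=\{1,\dots,N\}$, $d_j>0$, $X=(x_{i,j})\in\{0,1\}^{M\times N}$ with every row containing at least one $1$, $g_{i,j}\ge0$ with $g_{i,j}>0$ whenever $x_{i,j}=1$, $P_i>0$, $\sigma^2>0$, $K,B,\eta,\bar\omega>0$, $\omega_{i,j}(\boldsymbol{\rho})=B\log_2\!\big(1+\frac{P_i g_{i,j}}{\eta(\sum_{l\ne i}P_l g_{l,j}\rho_l+\sigma^2)}\big)$ and $I_i'(\boldsymbol{\rho})=\sum_{j:\,x_{i,j}=1}\max\{d_j/(K\omega_{i,j}(\boldsymbol{\rho})),\,d_j/(K\bar\omega)\}$, define $I_i''(\boldsymbol{\rho})=\min\{I_i'(\boldsymbol{\rho}),1\}$ and $\mathcal{J}''=[I_1'',\dots,I_M'']^T:\mathbb{R}_+^M\to\mathbb{R}_{++}^M$. Then $\mathcal{J}''$ is a standard interference mapping satisfying $\mathcal{J}''(\boldsymbol{\rho})\le\mathbf{1}$ for all $\boldsymbol{\rho}\in\mathbb{R}_+^M$, and $\mathcal{J}''$ has a unique fixed point $\boldsymbol{\rho}^\star\in\mathbb{R}_+^M$ (i.e. $\boldsymbol{\rho}^\star=\mathcal{J}''(\boldsymbol{\rho}^\star)$), which lies in $(0,1]^M$.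
   Context: $\mathbb{R}_+$ denotes the nonnegative reals and $\mathbb{R}_{++}$ the strictly positive reals; $\mathbf{1}$ is the all-ones vector; vector inequalities are componentwise. A function $I:\mathbb{R}_+^M\to\mathbb{R}_{++}$ is called a standard interference function if it satisfies scalability ($\alpha I(\mathbf{x})>I(\alpha\mathbf{x})$ for all $\mathbf{x}\in\mathbb{R}_+^M$, $\alpha>1$) and monotonicity ($I(\mathbf{x}_1)\ge I(\mathbf{x}_2)$ whenever $\mathbf{x}_1\ge\mathbf{x}_2$). A standard interference mapping is a map $\mathbf{x}\mapsto[I_1(\mathbf{x}),\dots,I_M(\mathbf{x})]^T$ with each $I_i$ a standard interference function. *)

theory Defs
  imports Complex_Main
begin

text \<open>Vectors in R^M are functions from a finite index type 'm (the base stations)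
to real; R_+^M is the set of componentwise nonnegative such functions.\<close>

definition nonneg_vec :: "('m \<Rightarrow> real) \<Rightarrow> bool" where
  "nonneg_vec x \<longleftrightarrow> (\<forall>i. 0 \<le> x i)"

definition standard_interference_function :: "(('m \<Rightarrow> real) \<Rightarrow> real) \<Rightarrow> bool" where
  "standard_interference_function I \<longleftrightarrow>
     (\<forall>x. nonneg_vec x \<longrightarrow> 0 < I x) \<and>
     (\<forall>x (\<alpha>::real). nonneg_vec x \<and> \<alpha> > 1 \<longrightarrow> \<alpha> * I x > I (\<lambda>k. \<alpha> * x k)) \<and>
     (\<forall>x1 x2. nonneg_vec x1 \<and> nonneg_vec x2 \<and> (\<forall>k. x2 k \<le> x1 k) \<longrightarrow> I x2 \<le> I x1)"

definition standard_interference_mapping :: "(('m \<Rightarrow> real) \<Rightarrow> ('m \<Rightarrow> real)) \<Rightarrow> bool" where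
  "standard_interference_mapping J \<longleftrightarrow> (\<forall>i. standard_interference_function (\<lambda>x. J x i))"

definition omega :: "real \<Rightarrow> real \<Rightarrow> real \<Rightarrow> ('m \<Rightarrow> real) \<Rightarrow> ('m \<Rightarrow> 'n \<Rightarrow> real)
    \<Rightarrow> 'm \<Rightarrow> 'n \<Rightarrow> ('m \<Rightarrow> real) \<Rightarrow> real" where
  "omega B \<eta> \<sigma>2 P g i j \<rho> =
     B * log 2 (1 + P i * g i j /
        (\<eta> * ((\<Sum>l\<in>UNIV - {i}. P l * g l j * \<rho> l) + \<sigma>2)))"

text \<open>I'_i(rho); X i j = True encodes x_{i,j} = 1.\<close>

definition I' :: "('m \<Rightarrow> 'n \<Rightarrow> bool) \<Rightarrow> ('n \<Rightarrow> real) \<Rightarrow> real \<Rightarrow> real \<Rightarrow> real \<Rightarrow> real \<Rightarrow> real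
    \<Rightarrow> ('m \<Rightarrow> real) \<Rightarrow> ('m \<Rightarrow> 'n \<Rightarrow> real) \<Rightarrow> 'm \<Rightarrow> ('m \<Rightarrow> real) \<Rightarrow> real" where
  "I' X d K B \<eta> \<omega>bar \<sigma>2 P g i \<rho> =
     (\<Sum>j\<in>{j. X i j}. max (d j / (K * omega B \<eta> \<sigma>2 P g i j \<rho>)) (d j / (K * \<omega>bar)))"

definition I'' :: "('m \<Rightarrow> 'n \<Rightarrow> bool) \<Rightarrow> ('n \<Rightarrow> real) \<Rightarrow> real \<Rightarrow> real \<Rightarrow> real \<Rightarrow> real \<Rightarrow> real
    \<Rightarrow> ('m \<Rightarrow> real) \<Rightarrow> ('m \<Rightarrow> 'n \<Rightarrow> real) \<Rightarrow> 'm \<Rightarrow> ('m \<Rightarrow> real) \<Rightarrow> real" where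
  "I'' X d K B \<eta> \<omega>bar \<sigma>2 P g i \<rho> = min (I' X d K B \<eta> \<omega>bar \<sigma>2 P g i \<rho>) 1"

definition J'' :: "('m \<Rightarrow> 'n \<Rightarrow> bool) \<Rightarrow> ('n \<Rightarrow> real) \<Rightarrow> real \<Rightarrow> real \<Rightarrow> real \<Rightarrow> real \<Rightarrow> real
    \<Rightarrow> ('m \<Rightarrow> real) \<Rightarrow> ('m \<Rightarrow> 'n \<Rightarrow> real) \<Rightarrow> ('m \<Rightarrow> real) \<Rightarrow> ('m \<Rightarrow> real)" where
  "J'' X d K B \<eta> \<omega>bar \<sigma>2 P g \<rho> = (\<lambda>i. I'' X d K B \<eta> \<omega>bar \<sigma>2 P g i \<rho>)"

end

theory Submission
  imports Defs
begin


lemma fixpoint_exists: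
  fixes J :: "('m::finite \<Rightarrow> real) \<Rightarrow> ('m \<Rightarrow> real)"
  assumes mono: "\<And>x1 x2 k. nonneg_vec x1 \<Longrightarrow> nonneg_vec x2 \<Longrightarrow> (\<forall>k. x2 k \<le> x1 k) \<Longrightarrow> J x2 k \<le> J x1 k"
    and bnd: "\<And>x k. nonneg_vec x \<Longrightarrow> 0 \<le> J x k \<and> J x k \<le> 1"
  shows "\<exists>\<rho>. nonneg_vec \<rho> \<and> \<rho> = J \<rho>"
proof -
  define A where "A = {\<rho>. (\<forall>k. 0 \<le> \<rho> k \<and> \<rho> k \<le> 1) \<and> (\<forall>k. \<rho> k \<le> J \<rho> k)}"
  define r where "r = (\<lambda>k. Sup ((\<lambda>\<rho>. \<rho> k) ` A))"
  have z: "(\<lambda>_. 0) \<in> A" using bnd[of "\<lambda>_. 0"] by (auto simp: A_def nonneg_vec_def)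
  have bdd: "bdd_above ((\<lambda>\<rho>. \<rho> k) ` A)" for k
    by (rule bdd_aboveI[of _ 1]) (auto simp: A_def)
  have ne: "(\<lambda>\<rho>. \<rho> k) ` A \<noteq> {}" for k using z by blast
  have up: "\<rho> k \<le> r k" if "\<rho> \<in> A" for \<rho> k
    unfolding r_def by (rule cSup_upper) (use that bdd in auto)
  have r0: "0 \<le> r k" for k using up[OF z] by simp
  have r1: "r k \<le> 1" for k unfolding r_def by (rule cSup_least) (use ne in \<open>auto simp: A_def\<close>)
  have rn: "nonneg_vec r" using r0 by (simp add: nonneg_vec_def)
  have rJ: "r k \<le> J r k" for k
  proof -
  have "Sup ((\<lambda>\<rho>. \<rho> k) ` A) \<le> J r k"
  proof (rule cSup_least[OF ne])
    fix v assume "v \<in> (\<lambda>\<rho>. \<rho> k) ` A"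
    then obtain \<rho> where \<rho>: "\<rho> \<in> A" "v = \<rho> k" by blast
    have "nonneg_vec \<rho>" using \<rho> by (auto simp: A_def nonneg_vec_def)
    hence "J \<rho> k \<le> J r k" using mono[of r \<rho> k] rn up[OF \<rho>(1)] by blast
    thus "v \<le> J r k" using \<rho> by (auto simp: A_def intro: order_trans)
  qed
  thus ?thesis by (metis r_def)
  qed
  have Jn: "nonneg_vec (J r)" using bnd[OF rn] by (simp add: nonneg_vec_def)
  have "J r \<in> A"
    using bnd[OF rn] mono[OF Jn rn] rJ by (auto simp: A_def)
  hence "J r k \<le> r k" for k using up by blast
  hence "r = J r" using rJ by (intro ext antisym) auto
  thus ?thesis using rn by blast
qed

lemma fixpoint_le:
  fixes J :: "('m::finite \<Rightarrow> real) \<Rightarrow> ('m \<Rightarrow> real)"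
  assumes std: "standard_interference_mapping J"
    and n1: "nonneg_vec \<rho>" and f1: "\<rho> = J \<rho>"
    and n2: "nonneg_vec \<rho>'" and f2: "\<rho>' = J \<rho>'"
  shows "\<rho>' i \<le> \<rho> i"
proof -
  have pos: "\<And>x k. nonneg_vec x \<Longrightarrow> 0 < J x k"
   and scal: "\<And>x \<alpha> k. nonneg_vec x \<Longrightarrow> \<alpha> > 1 \<Longrightarrow> \<alpha> * J x k > J (\<lambda>k. \<alpha> * x k) k"
   and mon: "\<And>x1 x2 k. nonneg_vec x1 \<Longrightarrow> nonneg_vec x2 \<Longrightarrow> (\<forall>k. x2 k \<le> x1 k) \<Longrightarrow> J x2 k \<le> J x1 k"
    using std unfolding standard_interference_mapping_def standard_interference_function_def by blast+
  have rp: "0 < \<rho> k" for k using pos[OF n1, of k] f1 by (metis)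
  define \<alpha> where "\<alpha> = Max (range (\<lambda>k. \<rho>' k / \<rho> k))"
  have le: "\<rho>' k \<le> \<alpha> * \<rho> k" for k
  proof -
    have "\<rho>' k / \<rho> k \<le> \<alpha>" unfolding \<alpha>_def by (rule Max_ge) auto
    thus ?thesis using rp[of k] by (simp add: divide_le_eq)
  qed
  show ?thesis
  proof (cases "\<alpha> \<le> 1")
    case True
    have "\<alpha> * \<rho> i \<le> \<rho> i" using True rp[of i] by (simp add: mult_le_cancel_right1)
    thus ?thesis using le[of i] by linarith
  next
    case False
    have "\<alpha> \<in> range (\<lambda>k. \<rho>' k / \<rho> k)" unfolding \<alpha>_def by (rule Max_in) auto
    then obtain k where k: "\<rho>' k / \<rho> k = \<alpha>" by auto
    hence k': "\<rho>' k = \<alpha> * \<rho> k" using rp[of k] by (simp add: field_simps)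
    have an: "nonneg_vec (\<lambda>k. \<alpha> * \<rho> k)" using False rp by (simp add: nonneg_vec_def less_imp_le)
    have "\<rho>' k = J \<rho>' k" using f2 by metis
    also have "\<dots> \<le> J (\<lambda>k. \<alpha> * \<rho> k) k" using mon[OF an n2] le by blast
    also have "\<dots> < \<alpha> * J \<rho> k" using scal[OF n1, of \<alpha> k] False by simp
    also have "\<dots> = \<rho>' k" using k' f1 by metis
    finally show ?thesis by simp
  qed
qed



locale ifsetup =
  fixes X :: "'m::finite \<Rightarrow> 'n::finite \<Rightarrow> bool"
    and d :: "'n \<Rightarrow> real" and g :: "'m \<Rightarrow> 'n \<Rightarrow> real" and P :: "'m \<Rightarrow> real"
    and \<sigma>2 K B \<eta> \<omega>bar :: real
  assumes d_pos: "\<forall>j. 0 < d j"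
    and X_rows: "\<forall>i. \<exists>j. X i j"
    and g_nonneg: "\<forall>i j. 0 \<le> g i j"
    and g_pos: "\<forall>i j. X i j \<longrightarrow> 0 < g i j"
    and P_pos: "\<forall>i. 0 < P i"
    and \<sigma>2_pos: "0 < \<sigma>2"
    and K_pos: "0 < K" and B_pos: "0 < B" and \<eta>_pos: "0 < \<eta>" and \<omega>bar_pos: "0 < \<omega>bar"
begin

abbreviation "S i j \<rho> \<equiv> (\<Sum>l\<in>UNIV - {i}. P l * g l j * \<rho> l) + \<sigma>2"
abbreviation "om i j \<rho> \<equiv> omega B \<eta> \<sigma>2 P g i j \<rho>"

lemma sum_nn: "nonneg_vec \<rho> \<Longrightarrow> 0 \<le> (\<Sum>l\<in>UNIV - {i}. P l * g l j * \<rho> l)"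
  using P_pos g_nonneg by (intro sum_nonneg) (auto simp: nonneg_vec_def less_imp_le)

lemma S_pos: assumes "nonneg_vec \<rho>" shows "0 < S i j \<rho>"
  using sum_nn[OF assms, where i=i and j=j] \<sigma>2_pos by linarith

lemma S_mono: "nonneg_vec \<rho>2 \<Longrightarrow> \<forall>k. \<rho>2 k \<le> \<rho>1 k \<Longrightarrow> S i j \<rho>2 \<le> S i j \<rho>1"
  using P_pos g_nonneg by (auto intro!: sum_mono mult_left_mono simp: less_imp_le)

lemma S_scale: assumes "nonneg_vec \<rho>" "\<alpha> > 1" shows "S i j (\<lambda>k. \<alpha> * \<rho> k) \<le> \<alpha> * S i j \<rho>"
proof -
  have "(\<Sum>l\<in>UNIV - {i}. P l * g l j * (\<alpha> * \<rho> l)) = \<alpha> * (\<Sum>l\<in>UNIV - {i}. P l * g l j * \<rho> l)"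
    by (simp add: sum_distrib_left algebra_simps)
  moreover have "\<sigma>2 \<le> \<alpha> * \<sigma>2" using assms \<sigma>2_pos by simp
  ultimately show ?thesis by (simp add: distrib_left)
qed

lemma c_pos: "X i j \<Longrightarrow> 0 < P i * g i j" using P_pos g_pos by simp

lemma om_pos: assumes "X i j" "nonneg_vec \<rho>" shows "0 < om i j \<rho>"
proof -
  have "0 < P i * g i j / (\<eta> * S i j \<rho>)" using c_pos[OF assms(1)] S_pos[OF assms(2)] \<eta>_pos by simp
  thus ?thesis unfolding omega_def using B_pos by simp
qed

lemma om_anti: assumes "X i j" "nonneg_vec \<rho>1" "nonneg_vec \<rho>2" "\<forall>k. \<rho>2 k \<le> \<rho>1 k"
  shows "om i j \<rho>1 \<le> om i j \<rho>2"
proof -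
  have s2: "0 < \<eta> * S i j \<rho>2" using S_pos[OF assms(3)] \<eta>_pos by simp
  have "\<eta> * S i j \<rho>2 \<le> \<eta> * S i j \<rho>1" using S_mono[OF assms(3,4)] \<eta>_pos by simp
  hence "P i * g i j / (\<eta> * S i j \<rho>1) \<le> P i * g i j / (\<eta> * S i j \<rho>2)"
    using c_pos[OF assms(1)] s2 by (intro divide_left_mono) (auto intro: less_imp_le)
  moreover have "0 < P i * g i j / (\<eta> * S i j \<rho>1)" using c_pos[OF assms(1)] S_pos[OF assms(2)] \<eta>_pos by simp
  ultimately show ?thesis unfolding omega_def using B_pos by simp
qed

lemma ln_scale:
  fixes y a :: real assumes y: "0<y" and a: "0<a" "a<1"
  shows "a * ln(1+y) < ln(1+a*y)"
proof -
  let ?f = "\<lambda>t. ln(1+a*t) - a*ln(1+t)"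
  have "?f 0 < ?f y"
  proof (rule DERIV_pos_imp_increasing_open[OF y])
    fix x :: real assume x: "0<x" "x<y"
    have ax: "a*x < x" using mult_strict_right_mono[of a 1 x] x a by simp
    have p1: "0 < 1+a*x" using x a by (simp add: add_pos_pos)
    have p2: "0 < 1+x" using x by simp
    have "DERIV ?f x :> (a/(1+a*x) - a*(1/(1+x)))"
      using p1 p2 by (auto intro!: derivative_eq_intros)
    moreover have "a/(1+a*x) - a*(1/(1+x)) > 0"
    proof -
      have "1+a*x < 1+x" using ax by simp
      hence "a/(1+x) < a/(1+a*x)" using p1 a by (intro divide_strict_left_mono) auto
      thus ?thesis by simp
    qed
    ultimately show "\<exists>d. DERIV ?f x :> d \<and> d > 0" by blast
  next
    have c1: "continuous_on {0..y} (\<lambda>t. ln(1+a*t))"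
    proof (rule continuous_on_ln)
      have "\<And>t. 0\<le>t \<Longrightarrow> 0 < 1+a*t" using a by (simp add: add_pos_nonneg)
      thus "\<forall>t\<in>{0..y}. 1+a*t \<noteq> 0" by force
    qed (auto intro!: continuous_intros)
    have c2: "continuous_on {0..y} (\<lambda>t. ln(1+t))"
      by (rule continuous_on_ln) (auto intro!: continuous_intros)
    show "continuous_on {0..y} ?f" using c1 c2 by (intro continuous_on_diff continuous_on_mult continuous_on_const)
  qed
  thus ?thesis by simp
qed

lemma om_scale: assumes "X i j" "nonneg_vec \<rho>" "\<alpha> > 1"
  shows "om i j \<rho> < \<alpha> * om i j (\<lambda>k. \<alpha> * \<rho> k)"
proof -
  define c where "c = P i * g i j"
  have c: "0 < c" using c_pos[OF assms(1)] by (simp add: c_def)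
  define y where "y = c / (\<eta> * S i j \<rho>)"
  have sp: "0 < \<eta> * S i j \<rho>" using S_pos[OF assms(2)] \<eta>_pos by simp
  have an: "nonneg_vec (\<lambda>k. \<alpha> * \<rho> k)" using assms(2,3) by (simp add: nonneg_vec_def)
  have sp2: "0 < \<eta> * S i j (\<lambda>k. \<alpha> * \<rho> k)" using S_pos[OF an] \<eta>_pos by simp
  have y: "0 < y" using c sp by (simp add: y_def)
  have "\<eta> * S i j (\<lambda>k. \<alpha> * \<rho> k) \<le> \<eta> * (\<alpha> * S i j \<rho>)"
    using S_scale[OF assms(2,3), where i=i and j=j] \<eta>_pos by (intro mult_left_mono) auto
  also have "\<dots> = \<alpha> * (\<eta> * S i j \<rho>)" by (simp add: ac_simps)
  finally have "\<eta> * S i j (\<lambda>k. \<alpha> * \<rho> k) \<le> \<alpha> * (\<eta> * S i j \<rho>)" .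
  hence "c / (\<alpha> * (\<eta> * S i j \<rho>)) \<le> c / (\<eta> * S i j (\<lambda>k. \<alpha> * \<rho> k))"
    using c sp2 by (intro divide_left_mono) (auto intro: less_imp_le)
  hence le1: "(1/\<alpha>) * y \<le> c / (\<eta> * S i j (\<lambda>k. \<alpha> * \<rho> k))" by (simp add: y_def)
  have "(1/\<alpha>) * ln (1+y) < ln (1 + (1/\<alpha>) * y)"
    by (rule ln_scale) (use y assms(3) in auto)
  also have "\<dots> \<le> ln (1 + c / (\<eta> * S i j (\<lambda>k. \<alpha> * \<rho> k)))"
  proof -
    have fp: "0 < c / (\<eta> * S i j (\<lambda>k. \<alpha> * \<rho> k))" using c sp2 by simp
    have "0 < (1/\<alpha>) * y" using y assms(3) by simp
    thus ?thesis using le1 fp by simp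
  qed
  finally have "ln (1+y) < \<alpha> * ln (1 + c / (\<eta> * S i j (\<lambda>k. \<alpha> * \<rho> k)))"
    using assms(3) by (simp add: field_simps)
  hence "B * (ln (1+y) / ln 2) < \<alpha> * (B * (ln (1 + c / (\<eta> * S i j (\<lambda>k. \<alpha> * \<rho> k))) / ln 2))"
    using B_pos by (simp add: field_simps)
  thus ?thesis unfolding omega_def log_def y_def c_def by simp
qed

definition "t i j \<rho> = max (d j / (K * om i j \<rho>)) (d j / (K * \<omega>bar))"

lemma t_pos: "0 < t i j \<rho>" unfolding t_def using d_pos K_pos \<omega>bar_pos by (simp add: max.strict_coboundedI2)

lemma t_mono: assumes "X i j" "nonneg_vec \<rho>1" "nonneg_vec \<rho>2" "\<forall>k. \<rho>2 k \<le> \<rho>1 k"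
  shows "t i j \<rho>2 \<le> t i j \<rho>1"
proof -
  have "d j / (K * om i j \<rho>2) \<le> d j / (K * om i j \<rho>1)"
    using om_anti[OF assms] om_pos[OF assms(1,2)] d_pos K_pos
    by (intro divide_left_mono mult_left_mono) (auto intro: less_imp_le)
  thus ?thesis unfolding t_def by (rule max.mono) simp
qed

lemma t_scale: assumes "X i j" "nonneg_vec \<rho>" "\<alpha> > 1"
  shows "t i j (\<lambda>k. \<alpha> * \<rho> k) < \<alpha> * t i j \<rho>"
proof -
  have an: "nonneg_vec (\<lambda>k. \<alpha> * \<rho> k)" using assms(2,3) by (simp add: nonneg_vec_def)
  have o1: "0 < om i j \<rho>" using om_pos[OF assms(1,2)] .
  have "om i j \<rho> / \<alpha> < om i j (\<lambda>k. \<alpha> * \<rho> k)" using om_scale[OF assms] assms(3) by (simp add: field_simps)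
  hence "d j / (K * om i j (\<lambda>k. \<alpha> * \<rho> k)) < d j / (K * (om i j \<rho> / \<alpha>))"
    using o1 om_pos[OF assms(1) an] d_pos K_pos assms(3) by (intro divide_strict_left_mono mult_strict_left_mono) auto
  also have "\<dots> = \<alpha> * (d j / (K * om i j \<rho>))" using assms(3) by simp
  finally have a: "d j / (K * om i j (\<lambda>k. \<alpha> * \<rho> k)) < \<alpha> * (d j / (K * om i j \<rho>))" .
  have q: "0 < d j / (K * \<omega>bar)" using d_pos K_pos \<omega>bar_pos by simp
  have b: "d j / (K * \<omega>bar) < \<alpha> * (d j / (K * \<omega>bar))"
    using mult_strict_right_mono[OF assms(3) q] by simp
  have "\<alpha> * max (d j / (K * om i j \<rho>)) (d j / (K * \<omega>bar)) = max (\<alpha> * (d j / (K * om i j \<rho>))) (\<alpha> * (d j / (K * \<omega>bar)))"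
    using assms(3) by (simp add: max_mult_distrib_left)
  moreover have "max (d j / (K * om i j (\<lambda>k. \<alpha> * \<rho> k))) (d j / (K * \<omega>bar))
      < max (\<alpha> * (d j / (K * om i j \<rho>))) (\<alpha> * (d j / (K * \<omega>bar)))"
    unfolding max_less_iff_conj
    using a b by (meson max.cobounded1 max.cobounded2 order_less_le_trans)
  ultimately show ?thesis unfolding t_def by simp
qed

lemma I'_eq: "I' X d K B \<eta> \<omega>bar \<sigma>2 P g i \<rho> = (\<Sum>j\<in>{j. X i j}. t i j \<rho>)"
  unfolding I'_def t_def by simp

lemma ne: "{j. X i j} \<noteq> {}" using X_rows by auto

lemma I'_pos: "0 < I' X d K B \<eta> \<omega>bar \<sigma>2 P g i \<rho>"
  unfolding I'_eq using ne t_pos by (intro sum_pos) auto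

lemma I'_mono: "nonneg_vec \<rho>1 \<Longrightarrow> nonneg_vec \<rho>2 \<Longrightarrow> \<forall>k. \<rho>2 k \<le> \<rho>1 k \<Longrightarrow>
   I' X d K B \<eta> \<omega>bar \<sigma>2 P g i \<rho>2 \<le> I' X d K B \<eta> \<omega>bar \<sigma>2 P g i \<rho>1"
  unfolding I'_eq by (intro sum_mono t_mono) auto

lemma I'_scale: "nonneg_vec \<rho> \<Longrightarrow> \<alpha> > 1 \<Longrightarrow>
   I' X d K B \<eta> \<omega>bar \<sigma>2 P g i (\<lambda>k. \<alpha> * \<rho> k) < \<alpha> * I' X d K B \<eta> \<omega>bar \<sigma>2 P g i \<rho>"
  unfolding I'_eq sum_distrib_left using ne by (intro sum_strict_mono t_scale) auto

lemma std: "standard_interference_mapping (J'' X d K B \<eta> \<omega>bar \<sigma>2 P g)"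
  unfolding standard_interference_mapping_def standard_interference_function_def J''_def I''_def
proof (intro allI conjI impI)
  fix i and x :: "'m \<Rightarrow> real"
  show "0 < min (I' X d K B \<eta> \<omega>bar \<sigma>2 P g i x) 1" using I'_pos by simp
next
  fix i and x :: "'m \<Rightarrow> real" and \<alpha> :: real assume a: "nonneg_vec x \<and> 1 < \<alpha>"
  have "I' X d K B \<eta> \<omega>bar \<sigma>2 P g i (\<lambda>k. \<alpha> * x k) < \<alpha> * I' X d K B \<eta> \<omega>bar \<sigma>2 P g i x"
    using I'_scale a by blast
  thus "min (I' X d K B \<eta> \<omega>bar \<sigma>2 P g i (\<lambda>k. \<alpha> * x k)) 1 < \<alpha> * min (I' X d K B \<eta> \<omega>bar \<sigma>2 P g i x) 1"
    using a by (auto simp: min_def)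
next
  fix i and x1 x2 :: "'m \<Rightarrow> real" assume a: "nonneg_vec x1 \<and> nonneg_vec x2 \<and> (\<forall>k. x2 k \<le> x1 k)"
  thus "min (I' X d K B \<eta> \<omega>bar \<sigma>2 P g i x2) 1 \<le> min (I' X d K B \<eta> \<omega>bar \<sigma>2 P g i x1) 1"
    using I'_mono[of x1 x2 i] by (auto simp: min_def)
qed

end

theorem mainTheorem4:
  fixes X :: "'m::finite \<Rightarrow> 'n::finite \<Rightarrow> bool"
    and d :: "'n \<Rightarrow> real" and g :: "'m \<Rightarrow> 'n \<Rightarrow> real" and P :: "'m \<Rightarrow> real"
    and \<sigma>2 K B \<eta> \<omega>bar :: real
  assumes d_pos: "\<forall>j. 0 < d j"
    and X_rows: "\<forall>i. \<exists>j. X i j"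
    and g_nonneg: "\<forall>i j. 0 \<le> g i j"
    and g_pos: "\<forall>i j. X i j \<longrightarrow> 0 < g i j"
    and P_pos: "\<forall>i. 0 < P i"
    and \<sigma>2_pos: "0 < \<sigma>2"
    and K_pos: "0 < K" and B_pos: "0 < B" and \<eta>_pos: "0 < \<eta>" and \<omega>bar_pos: "0 < \<omega>bar"
  shows "standard_interference_mapping (J'' X d K B \<eta> \<omega>bar \<sigma>2 P g)
    \<and> (\<forall>\<rho>. nonneg_vec \<rho> \<longrightarrow> (\<forall>i. J'' X d K B \<eta> \<omega>bar \<sigma>2 P g \<rho> i \<le> 1))
    \<and> (\<exists>!\<rho>. nonneg_vec \<rho> \<and> \<rho> = J'' X d K B \<eta> \<omega>bar \<sigma>2 P g \<rho>)
    \<and> (\<forall>\<rho>. nonneg_vec \<rho> \<and> \<rho> = J'' X d K B \<eta> \<omega>bar \<sigma>2 P g \<rho> \<longrightarrow>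
          (\<forall>i. 0 < \<rho> i \<and> \<rho> i \<le> 1))"
proof -
  interpret ifsetup X d g P \<sigma>2 K B \<eta> \<omega>bar
    using assms by unfold_locales auto
  let ?J = "J'' X d K B \<eta> \<omega>bar \<sigma>2 P g"
  have S: "standard_interference_mapping ?J" by (rule std)
  have pos: "\<And>x k. nonneg_vec x \<Longrightarrow> 0 < ?J x k"
   and mon: "\<And>x1 x2 k. nonneg_vec x1 \<Longrightarrow> nonneg_vec x2 \<Longrightarrow> (\<forall>k. x2 k \<le> x1 k) \<Longrightarrow> ?J x2 k \<le> ?J x1 k"
    using S unfolding standard_interference_mapping_def standard_interference_function_def by blast+
  have le1: "\<And>x k. ?J x k \<le> 1" by (simp add: J''_def I''_def)
  have ex: "\<exists>\<rho>. nonneg_vec \<rho> \<and> \<rho> = ?J \<rho>"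
    proof (rule fixpoint_exists)
    fix x :: "'m \<Rightarrow> real" and k assume "nonneg_vec x"
    thus "0 \<le> ?J x k \<and> ?J x k \<le> 1" using pos[of x k] le1[of x k] by simp
  qed (use mon in auto)
  have un: "\<exists>!\<rho>. nonneg_vec \<rho> \<and> \<rho> = ?J \<rho>"
  proof -
    obtain r where r: "nonneg_vec r" "r = ?J r" using ex by blast
    show ?thesis
    proof (rule ex1I[of _ r])
      show "nonneg_vec r \<and> r = ?J r" using r by blast
    next
      fix s assume s: "nonneg_vec s \<and> s = ?J s"
      show "s = r"
      proof
        fix i
        show "s i = r i"
          using fixpoint_le[OF S r, of s i] fixpoint_le[OF S _ _ r, of s i] s by (auto intro: antisym)
      qed
    qed
  qed
  have last: "\<forall>\<rho>. nonneg_vec \<rho> \<and> \<rho> = ?J \<rho> \<longrightarrow> (\<forall>i. 0 < \<rho> i \<and> \<rho> i \<le> 1)"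
    using pos le1 by metis
  show ?thesis using S le1 un last by blast
qed

end
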